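(* Let $d\ge 0$ be an integer, let $b_0=0<b_1<\dots<b_d$ be real numbers, and let $p_0(x),p_1(x),\dots,p_d(x)\in\mathbf{R}[x]$ be polynomials with real coefficients, not all of them zero. Then the function $$F(x)=\sum_{i=0}^d p_i(x)\log(x+b_i),$$ defined for $x>0$, has only finitely many positive real zeros. In particular, the sequence $(\log n)_{n\ge 1}$ is not holonomic.
   Context: A sequence of complex numbers $(a_n)_{n\ge 1}$ is called holonomic (P-recursive, D-finite) if there exist an integer $d\ge 0$ and polynomials $p_0(x),\dots,p_d(x)\in\mathbf{C}[x]$, not all zero, such that $p_d(n)a_{n+d}+\cdots+p_1(n)a_{n+1}+p_0(n)a_n=0$ for every integer $n\ge 1$. Here $\log$ denotes the natural logarithm. *)

theory Defs
  imports Complex_Main "HOL-Computational_Algebra.Polynomial"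
begin

text \<open>A sequence (a_n)_{n \<ge> 1} of complex numbers is holonomic if there are d \<ge> 0 and
  complex polynomials p_0..p_d, not all zero, with
  p_d(n) a_{n+d} + ... + p_0(n) a_n = 0 for every n \<ge> 1.
  The value a 0 is irrelevant (the sequence is indexed from 1).\<close>
definition holonomic :: "(nat \<Rightarrow> complex) \<Rightarrow> bool" where
  "holonomic a \<longleftrightarrow>
     (\<exists>(d::nat) (p::nat \<Rightarrow> complex poly).
        (\<exists>i\<le>d. p i \<noteq> 0) \<and>
        (\<forall>n\<ge>1. (\<Sum>i\<le>d. poly (p i) (of_nat n) * a (n + i)) = 0))"

end

theory Submission
  imports Defs "HOL-Complex_Analysis.Complex_Analysis" "HOL-Real_Asymp.Real_Asymp"
begin

lemma ofreal_to0: "((\<lambda>t::real. complex_of_real t) \<longlongrightarrow> 0) (at_right 0)"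
proof -
  have "((\<lambda>t::real. complex_of_real t) \<longlongrightarrow> complex_of_real 0) (at_right 0)"
    by (intro tendsto_of_real tendsto_ident_at)
  then show ?thesis by simp
qed

lemma hol_isCont: "f holomorphic_on ball c r \<Longrightarrow> z \<in> ball c r \<Longrightarrow> isCont f z"
  by (meson continuous_on_eq_continuous_at holomorphic_on_imp_continuous_on open_ball)

lemma factor0:
  fixes f :: "complex \<Rightarrow> complex"
  assumes hf: "f holomorphic_on ball 0 r" and z0: "z0 \<in> ball 0 r" "f z0 \<noteq> 0"
  obtains n g c where "c \<noteq> 0" "((\<lambda>t::real. g (complex_of_real t)) \<longlongrightarrow> c) (at_right 0)"
    "eventually (\<lambda>t::real. f (of_real t) = of_real t ^ n * g (of_real t)) (at_right 0)"
proof -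
  have r: "r > 0" using z0 by (auto simp: dist_norm) (smt (verit) norm_ge_zero)
  show ?thesis
  proof (cases "f 0 = 0")
    case False
    have "isCont f 0"
      using hf r by (intro hol_isCont) auto
    then have "((\<lambda>t::real. f (complex_of_real t)) \<longlongrightarrow> f 0) (at_right 0)"
      using isCont_tendsto_compose[OF _ ofreal_to0] by blast
    then show ?thesis using that[of "f 0" f 0] False by auto
  next
    case True
    have nc: "\<not> f constant_on ball 0 r"
      using True z0 r unfolding constant_on_def by (metis centre_in_ball)
    show ?thesis
    proof (rule holomorphic_factor_zero_nonconstant[OF hf open_ball connected_ball _ True nc])
      show "0 \<in> ball 0 r" using r by simp
    next
      fix g r' and n::nat
      assume g: "0 < n"  "0 < r'"  "ball 0 r' \<subseteq> ball 0 r"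
            "g holomorphic_on ball 0 r'"
            "\<And>w. w \<in> ball 0 r' \<Longrightarrow> f w = (w - 0)^n * g w"
            "\<And>w. w \<in> ball 0 r' \<Longrightarrow> g w \<noteq> 0"
      have "isCont g 0"
        using g by (intro hol_isCont) auto
      then have lim: "((\<lambda>t::real. g (complex_of_real t)) \<longlongrightarrow> g 0) (at_right 0)"
        using isCont_tendsto_compose[OF _ ofreal_to0] by blast
      have "eventually (\<lambda>t::real. t \<in> {0<..<r'}) (at_right 0)"
        using eventually_at_right_real g(2) by blast
      then have "eventually (\<lambda>t::real. f (of_real t) = of_real t ^ n * g (of_real t)) (at_right 0)"
        by eventually_elim (use g(5) in auto)
      then show ?thesis using that[OF _ lim] g(6)[of 0] g(2) by auto
    qed
  qed
qed

lemma L: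
  fixes \<alpha> \<beta> :: "complex \<Rightarrow> complex"
  assumes ha: "\<alpha> holomorphic_on ball 0 r" and hb: "\<beta> holomorphic_on ball 0 r"
    and fr: "frequently (\<lambda>t::real. \<alpha> (of_real t) * of_real (ln t) + \<beta> (of_real t) = 0) (at_right 0)"
  shows "\<forall>z\<in>ball 0 r. \<alpha> z = 0 \<and> \<beta> z = 0"
proof (rule ccontr)
  assume nz: "\<not> ?thesis"
  define \<phi> where "\<phi> t = \<alpha> (of_real t) * of_real (ln t) + \<beta> (of_real t)" for t::real
  have r: "r > 0" using nz by (auto simp: dist_norm) (smt (verit) norm_ge_zero)+
  have inb: "complex_of_real t \<in> ball 0 r" if "0 < t" "t < r" for t
    using that by (simp add: dist_norm)
  have ev_r: "eventually (\<lambda>t::real. t \<in> {0<..<min r 1}) (at_right 0)"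
    using eventually_at_right_real[of 0 "min r 1"] r by simp
  have lnneg: "ln t < 0" if "t \<in> {0<..<min r 1}" for t::real using that by simp
  have "eventually (\<lambda>t. \<phi> t \<noteq> 0) (at_right 0)"
  proof (cases "\<forall>z\<in>ball 0 r. \<alpha> z = 0")
    case True
    then obtain z0 where z0: "z0 \<in> ball 0 r" "\<beta> z0 \<noteq> 0" using nz by auto
    obtain n g c where c: "c \<noteq> 0" and lim: "((\<lambda>t::real. g (complex_of_real t)) \<longlongrightarrow> c) (at_right 0)"
      and ev: "eventually (\<lambda>t::real. \<beta> (of_real t) = of_real t ^ n * g (of_real t)) (at_right 0)"
      using factor0[OF hb z0] by blast
    have "eventually (\<lambda>t. g (of_real t) \<noteq> 0) (at_right 0)" using tendsto_imp_eventually_ne[OF lim c] .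
    then show ?thesis using ev ev_r
      by eventually_elim (use True inb in \<open>auto simp: \<phi>_def\<close>)
  next
    case False
    then obtain z1 where z1: "z1 \<in> ball 0 r" "\<alpha> z1 \<noteq> 0" by auto
    obtain k a ca where ca: "ca \<noteq> 0" and lima: "((\<lambda>t::real. a (complex_of_real t)) \<longlongrightarrow> ca) (at_right 0)"
      and eva: "eventually (\<lambda>t::real. \<alpha> (of_real t) = of_real t ^ k * a (of_real t)) (at_right 0)"
      using factor0[OF ha z1] by blast
    show ?thesis
    proof (cases "\<forall>z\<in>ball 0 r. \<beta> z = 0")
      case True
      have "eventually (\<lambda>t. a (of_real t) \<noteq> 0) (at_right 0)" using tendsto_imp_eventually_ne[OF lima ca] .
      then show ?thesis using eva ev_r
      proof eventually_elim
        case (elim t)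
        then have "ln t \<noteq> 0" using lnneg by force
        with elim show ?case using True inb by (auto simp: \<phi>_def)
      qed
    next
      case False
      then obtain z2 where z2: "z2 \<in> ball 0 r" "\<beta> z2 \<noteq> 0" by auto
      obtain j g cb where cb: "cb \<noteq> 0" and limb: "((\<lambda>t::real. g (complex_of_real t)) \<longlongrightarrow> cb) (at_right 0)"
        and evb: "eventually (\<lambda>t::real. \<beta> (of_real t) = of_real t ^ j * g (of_real t)) (at_right 0)"
        using factor0[OF hb z2] by blast
      show ?thesis
      proof (cases "k \<le> j")
        case True
        have l1: "((\<lambda>t::real. 1 / ln t) \<longlongrightarrow> 0) (at_right 0)" by real_asymp
        have l2: "((\<lambda>t::real. complex_of_real (1 / ln t)) \<longlongrightarrow> complex_of_real 0) (at_right 0)"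
          by (rule tendsto_of_real[OF l1])
        have "((\<lambda>t::real. a (of_real t) + of_real t ^ (j-k) * g (of_real t) * complex_of_real (1 / ln t))
               \<longlongrightarrow> ca + 0 ^ (j-k) * cb * complex_of_real 0) (at_right 0)"
          by (intro tendsto_intros lima limb l2 ofreal_to0)
        then have "eventually (\<lambda>t. a (of_real t) + of_real t ^ (j-k) * g (of_real t) * complex_of_real (1 / ln t) \<noteq> 0) (at_right 0)"
          using ca by (intro tendsto_imp_eventually_ne) auto
        then show ?thesis using eva evb ev_r
        proof eventually_elim
          case (elim t)
          then have lt: "ln t \<noteq> 0" using lnneg by force
          have tj: "complex_of_real t ^ j = of_real t ^ k * of_real t ^ (j-k)"
            using True by (simp add: power_add[symmetric])
          have "\<phi> t = (of_real t ^ k * of_real (ln t)) *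
              (a (of_real t) + of_real t ^ (j-k) * g (of_real t) * complex_of_real (1 / ln t))"
            using elim lt unfolding \<phi>_def tj by (simp add: field_simps)
          then show ?case using elim lt by simp
        qed
      next
        case False
        have l1: "((\<lambda>t::real. t * ln t) \<longlongrightarrow> 0) (at_right 0)" by real_asymp
        have l2: "((\<lambda>t::real. complex_of_real (t * ln t)) \<longlongrightarrow> complex_of_real 0) (at_right 0)"
          by (rule tendsto_of_real[OF l1])
        have "((\<lambda>t::real. g (of_real t) + of_real t ^ (k-j-1) * complex_of_real (t * ln t) * a (of_real t))
               \<longlongrightarrow> cb + 0 ^ (k-j-1) * complex_of_real 0 * ca) (at_right 0)"
          by (intro tendsto_intros lima limb l2 ofreal_to0)
        then have "eventually (\<lambda>t. g (of_real t) + of_real t ^ (k-j-1) * complex_of_real (t * ln t) * a (of_real t) \<noteq> 0) (at_right 0)"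
          using cb by (intro tendsto_imp_eventually_ne) auto
        then show ?thesis using eva evb ev_r
        proof eventually_elim
          case (elim t)
          have tk: "complex_of_real t ^ k = of_real t ^ j * (of_real t ^ (k-j-1) * of_real t)"
          proof -
            have km: "k = j + (k-j-1) + 1" using False by simp
            have aux: "complex_of_real t ^ (j + (k-j-1) + 1) = of_real t ^ j * (of_real t ^ (k-j-1) * of_real t)"
              by (simp only: power_add power_one_right mult.assoc)
            show ?thesis using aux km by metis
          qed
          have "\<phi> t = of_real t ^ j *
              (g (of_real t) + of_real t ^ (k-j-1) * complex_of_real (t * ln t) * a (of_real t))"
            using elim unfolding \<phi>_def tk by (simp add: field_simps)
          then show ?case using elim by simp
        qed
      qed
    qed
  qed
  with fr show False unfolding frequently_def \<phi>_def by simp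
qed


definition cG :: "(nat \<Rightarrow> real) \<Rightarrow> (nat \<Rightarrow> real poly) \<Rightarrow> nat set \<Rightarrow> complex \<Rightarrow> complex" where
  "cG b p I z = (\<Sum>i\<in>I. poly (map_poly of_real (p i)) z * Ln (z + of_real (b i)))"

definition rF :: "(nat \<Rightarrow> real) \<Rightarrow> (nat \<Rightarrow> real poly) \<Rightarrow> nat set \<Rightarrow> real \<Rightarrow> real" where
  "rF b p I x = (\<Sum>i\<in>I. poly (p i) x * ln (x + b i))"

lemma poly_of_real: "poly (map_poly of_real p) (complex_of_real x) = of_real (poly p x)"
  by (induction p) (auto simp: map_poly_pCons)

lemma cG_real:
  assumes "\<And>i. i \<in> I \<Longrightarrow> x + b i > 0"
  shows "cG b p I (of_real x) = of_real (rF b p I x)"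
  unfolding cG_def rF_def of_real_sum
proof (rule sum.cong[OF refl])
  fix i assume i: "i \<in> I"
  have "Ln (complex_of_real x + complex_of_real (b i)) = of_real (ln (x + b i))"
    using assms[OF i] by (simp add: Ln_of_real flip: of_real_add)
  then show "poly (map_poly complex_of_real (p i)) (complex_of_real x) * Ln (complex_of_real x + complex_of_real (b i)) =
         complex_of_real (poly (p i) x * ln (x + b i))"
    by (simp add: poly_of_real)
qed

definition Sl :: "real \<Rightarrow> complex set" where
  "Sl c = - (complex_of_real ` {..-c})"

lemma Sl_open: "open (Sl c)"
  unfolding Sl_def using closed_slot_left by blast

lemma Sl_conn: "connected (Sl c)"
  unfolding Sl_def by (intro starlike_imp_connected starlike_slotted_complex_plane_left)

lemma Sl_iff: "z \<in> Sl c \<longleftrightarrow> \<not> (Re z \<le> -c \<and> Im z = 0)"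
  unfolding Sl_def complex_slot_left_eq by auto

lemma ball_Sl: "r > 0 \<Longrightarrow> ball 0 r \<subseteq> Sl r"
  unfolding Sl_iff by (auto simp: Sl_iff dist_norm) (smt (verit) abs_Re_le_cmod)

lemma real_Sl: "x > -c \<Longrightarrow> complex_of_real x \<in> Sl c"
  by (simp add: Sl_iff)

lemma cG_hol:
  assumes "\<And>i. i \<in> I \<Longrightarrow> b i \<ge> c"
  shows "cG b p I holomorphic_on Sl c"
proof -
  have "(\<lambda>z. \<Sum>i\<in>I. poly (map_poly of_real (p i)) z * Ln (z + of_real (b i))) holomorphic_on Sl c"
  proof (intro holomorphic_intros)
    fix i z assume i: "i \<in> I" and z: "z \<in> Sl c"
    show "z + complex_of_real (b i) \<notin> \<real>\<^sub>\<le>\<^sub>0"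
      using z assms[OF i] by (auto simp: Sl_iff complex_nonpos_Reals_iff)
  qed
  then show ?thesis unfolding cG_def[abs_def] .
qed

lemma islimpt_of_real:
  assumes "\<xi> islimpt U"
  shows "complex_of_real \<xi> islimpt (complex_of_real ` U)"
  unfolding islimpt_approachable
proof (intro allI impI)
  fix e :: real assume "e > 0"
  then obtain x where "x \<in> U" "x \<noteq> \<xi>" "dist x \<xi> < e"
    using assms unfolding islimpt_approachable by blast
  then show "\<exists>x'\<in>complex_of_real ` U. x' \<noteq> complex_of_real \<xi> \<and> dist x' (complex_of_real \<xi>) < e"
    by (intro bexI[of _ "of_real x"]) (auto simp: dist_of_real)
qed

lemma continuation:
  assumes hf: "f holomorphic_on Sl c" and xi: "\<xi> > -c" "\<xi> islimpt U" and U: "U \<subseteq> {-c<..}"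
    and U0: "\<And>x. x \<in> U \<Longrightarrow> f (of_real x) = 0" and x: "x > -c"
  shows "f (of_real x) = 0"
proof (rule analytic_continuation[OF hf Sl_open Sl_conn])
  show "complex_of_real ` U \<subseteq> Sl c" using U real_Sl by auto
  show "complex_of_real \<xi> \<in> Sl c" using xi real_Sl by auto
  show "complex_of_real \<xi> islimpt complex_of_real ` U" using islimpt_of_real[OF xi(2)] .
  show "\<And>z. z \<in> complex_of_real ` U \<Longrightarrow> f z = 0" using U0 by auto
  show "complex_of_real x \<in> Sl c" using x real_Sl by auto
qed

lemma islimpt_Ioo: "a < (b::real) \<Longrightarrow> (a+b)/2 islimpt {a<..<b}"
  by (rule open_imp_islimpt) auto


lemma mono_b:
  assumes "\<And>i. i < d \<Longrightarrow> b i < b (Suc i)" "i \<le> j" "j \<le> d"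
  shows "b i \<le> (b j :: real)"
  using assms(2,3)
proof (induction j)
  case 0 then show ?case by simp
next
  case (Suc j)
  show ?case
  proof (cases "i = Suc j")
    case False
    then have "b i \<le> b j" using Suc by auto
    also have "\<dots> < b (Suc j)" using assms(1) Suc by auto
    finally show ?thesis by simp
  qed simp
qed

lemma split0: "b 0 = 0 \<Longrightarrow> rF b p {..d} x = poly (p 0) x * ln x + rF b p {1..d} x"
proof -
  assume b0: "b 0 = 0"
  have "{..d} = insert 0 {1..d}" by auto
  then show ?thesis unfolding rF_def using b0 by (simp add: sum.insert)
qed

lemma near0:
  assumes b0: "b 0 = 0" and inc: "\<And>i. i < d \<Longrightarrow> b i < b (Suc i)"
    and fr: "frequently (\<lambda>t. rF b p {..d} t = 0) (at_right 0)"
    and r: "r = (if d = 0 then 1 else b 1)"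
  shows "p 0 = 0" "\<forall>z\<in>ball 0 r. cG b p {1..d} z = 0" "r > 0"
    "\<And>i. i \<in> {1..d} \<Longrightarrow> b i \<ge> r"
proof -
  show rpos: "r > 0" using r inc[of 0] b0 by auto
  show bge: "\<And>i. i \<in> {1..d} \<Longrightarrow> b i \<ge> r" using r mono_b[where d=d and b=b and i=1, OF inc] by auto
  have bpos: "i \<in> {1..d} \<Longrightarrow> b i > 0" for i using bge rpos by force
  have hb: "cG b p {1..d} holomorphic_on ball 0 r"
    using cG_hol[of "{1..d}" r b p, OF bge] ball_Sl[OF rpos] by (blast intro: holomorphic_on_subset)
  have ha: "(\<lambda>z. poly (map_poly of_real (p 0)) z) holomorphic_on ball 0 r"
    by (intro holomorphic_intros)
  have id: "poly (map_poly of_real (p 0)) (of_real t) * of_real (ln t) + cG b p {1..d} (of_real t)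
      = of_real (rF b p {..d} t)" if "t > 0" for t
  proof -
    have "cG b p {1..d} (of_real t) = of_real (rF b p {1..d} t)"
      by (rule cG_real) (use that bpos in force)
    then show ?thesis by (simp add: split0[where b=b, OF b0] poly_of_real)
  qed
  have "frequently (\<lambda>t. poly (map_poly of_real (p 0)) (of_real t) * of_real (ln t) + cG b p {1..d} (of_real t) = 0) (at_right 0)"
  proof (rule frequently_rev_mp[OF fr])
    show "\<forall>\<^sub>F t in at_right 0. rF b p {..d} t = 0 \<longrightarrow> poly (map_poly of_real (p 0)) (of_real t) * of_real (ln t) + cG b p {1..d} (of_real t) = 0"
      using eventually_at_right_less[of "0::real"] by (rule eventually_mono) (metis id of_real_0)
  qed
  from L[OF ha hb this] have Z: "\<forall>z\<in>ball 0 r. poly (map_poly of_real (p 0)) z = 0 \<and> cG b p {1..d} z = 0" .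
  then show "\<forall>z\<in>ball 0 r. cG b p {1..d} z = 0" by blast
  have "{0<..<r} \<subseteq> {x. poly (p 0) x = 0}"
  proof
    fix t assume "t \<in> {0<..<r}"
    then have "complex_of_real t \<in> ball 0 r" by (simp add: dist_norm)
    then have "poly (map_poly of_real (p 0)) (complex_of_real t) = 0" using Z by blast
    then show "t \<in> {x. poly (p 0) x = 0}" by (simp add: poly_of_real)
  qed
  then have "infinite {x. poly (p 0) x = 0}" using rpos infinite_Ioo finite_subset by blast
  then show "p 0 = 0" using poly_roots_finite by blast
qed


lemma tail0:
  assumes b0: "b 0 = 0" and inc: "\<And>i. i < d \<Longrightarrow> b i < b (Suc i)"
    and fr: "frequently (\<lambda>t. rF b p {..d} t = 0) (at_right 0)"
    and r: "r = (if d = 0 then 1 else b 1)" and x: "x > -r"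
  shows "rF b p {1..d} x = 0"
proof -
  note N = near0[OF b0 inc fr r]
  have "cG b p {1..d} (of_real x) = 0"
  proof (rule continuation[of _ r "r/2" "{0<..<r}"])
    show "cG b p {1..d} holomorphic_on Sl r" by (rule cG_hol) (use N in auto)
    show "- r < r / 2" using N by simp
    show "r / 2 islimpt {0<..<r}" using islimpt_Ioo[of 0 r] N by simp
    show "{0<..<r} \<subseteq> {- r<..}" by auto
    show "cG b p {1..d} (complex_of_real t) = 0" if "t \<in> {0<..<r}" for t
      using N(2) that by (auto simp: dist_norm)
    show "- r < x" by fact
  qed
  moreover have "cG b p {1..d} (of_real x) = of_real (rF b p {1..d} x)"
    by (rule cG_real) (use N x in force)
  ultimately show ?thesis by simp
qed

lemma freq_of_all: assumes h: "\<forall>x>0. f x = (0::real)" shows "frequently (\<lambda>t. f t = 0) (at_right (0::real))"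
proof -
  have "eventually (\<lambda>t. f t = 0) (at_right 0)"
    using eventually_at_right_less[of "0::real"] by (rule eventually_mono) (use h in auto)
  then show ?thesis by (intro eventually_frequently) simp_all
qed

lemma indep:
  assumes "b 0 = 0" "\<And>i. i < d \<Longrightarrow> b i < b (Suc i)" "\<forall>x>0. rF b p {..d} x = 0"
  shows "\<forall>i\<le>d. p i = 0"
  using assms
proof (induction d arbitrary: b p)
  case 0
  then show ?case using near0(1)[OF 0(1) _ freq_of_all[OF 0(3)]] by auto
next
  case (Suc d)
  note fr = freq_of_all[OF Suc(4)]
  have p0: "p 0 = 0" using near0(1)[OF Suc(2,3) fr] by blast
  have tl: "rF b p {1..Suc d} x = 0" if "x > - b 1" for x
    using tail0[OF Suc(2,3) fr _ that] by simp
  define b' where "b' i = b (Suc i) - b 1" for i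
  define p' where "p' i = pcompose (p (Suc i)) [:-b 1, 1:]" for i
  have "\<forall>i\<le>d. p' i = 0"
  proof (rule Suc.IH)
    show "b' 0 = 0" by (simp add: b'_def)
    show "b' i < b' (Suc i)" if "i < d" for i using Suc(3)[of "Suc i"] that by (simp add: b'_def)
    show "\<forall>x>0. rF b' p' {..d} x = 0"
    proof (intro allI impI)
      fix y :: real assume y: "y > 0"
      have "rF b' p' {..d} y = rF b p {1..Suc d} (y - b 1)"
        unfolding rF_def b'_def p'_def atLeast0AtMost[symmetric]
        using sum.shift_bounds_cl_Suc_ivl[of "\<lambda>i. poly (p i) (y - b 1) * ln (y - b 1 + b i)" 0 d]
        by (simp add: poly_pcompose algebra_simps)
      also have "\<dots> = 0" using tl y by simp
      finally show "rF b' p' {..d} y = 0" .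
    qed
  qed
  then have "p (Suc i) = 0" if "i \<le> d" for i
    using that pcompose_eq_0[of "p (Suc i)" "[:-b 1, 1:]"] by (simp add: p'_def)
  with p0 show ?case by (metis Suc_le_mono not0_implies_Suc)
qed


lemma b_nonneg:
  fixes b :: "nat \<Rightarrow> real"
  assumes b0: "b 0 = 0" and inc: "\<And>i. i < d \<Longrightarrow> b i < b (Suc i)" and i: "i \<le> d"
  shows "b i \<ge> 0"
  using mono_b[where d=d and b=b and i=0 and j=i, OF inc] b0 i by simp

lemma zero_all:
  assumes b0: "b 0 = 0" and inc: "\<And>i. i < d \<Longrightarrow> b i < b (Suc i)"
    and nz: "\<exists>i\<le>d. p i \<noteq> 0"
    and xi: "\<xi> > 0" "\<xi> islimpt U" and U: "U \<subseteq> {0<..}" and U0: "\<And>x. x \<in> U \<Longrightarrow> rF b p {..d} x = 0"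
  shows False
proof -
  have bnn: "\<And>i. i \<in> {..d} \<Longrightarrow> b i \<ge> 0" using b_nonneg[OF b0 inc] by auto
  have "\<forall>x>0. rF b p {..d} x = 0"
  proof (intro allI impI)
    fix x :: real assume x: "x > 0"
    have re: "cG b p {..d} (of_real y) = of_real (rF b p {..d} y)" if "y > 0" for y
      by (rule cG_real) (use bnn that in force)
    have "cG b p {..d} (of_real x) = 0"
    proof (rule continuation[of _ 0 \<xi> U])
      show "cG b p {..d} holomorphic_on Sl 0" by (rule cG_hol) (use bnn in auto)
      show "\<And>x. x \<in> U \<Longrightarrow> cG b p {..d} (complex_of_real x) = 0" using re U U0 by auto
    qed (use xi U x in auto)
    then show "rF b p {..d} x = 0" using re[OF x] by simp
  qed
  from indep[OF b0 inc this] nz show False by blast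
qed

lemma not0:
  assumes b0: "b 0 = 0" and inc: "\<And>i. i < d \<Longrightarrow> b i < b (Suc i)"
    and nz: "\<exists>i\<le>d. p i \<noteq> 0"
  shows "\<not> frequently (\<lambda>t. rF b p {..d} t = 0) (at_right 0)"
proof
  assume fr: "frequently (\<lambda>t. rF b p {..d} t = 0) (at_right 0)"
  define r where "r = (if d = 0 then 1 else b 1)"
  note N = near0[OF b0 inc fr r_def]
  show False
  proof (rule zero_all[OF b0 inc nz, of "r/2" "{0<..<r}"])
    show "r/2 islimpt {0<..<r}" using islimpt_Ioo[of 0 r] N by simp
    show "rF b p {..d} x = 0" if "x \<in> {0<..<r}" for x
      using tail0[OF b0 inc fr r_def, of x] that N(1) by (simp add: split0[where b=b, OF b0])
  qed (use N in auto)
qed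


lemma aR_eq:
  fixes q :: "real poly"
  assumes "degree q \<le> D" "t > 0"
  shows "(\<Sum>k\<le>degree q. coeff q k * t ^ (D - k)) = t ^ D * poly q (1/t)"
  unfolding poly_altdef sum_distrib_left
proof (rule sum.cong[OF refl])
  fix k assume "k \<in> {..degree q}"
  then have "k \<le> D" using assms by auto
  then show "coeff q k * t ^ (D - k) = t ^ D * (coeff q k * (1 / t) ^ k)"
    using assms(2) by (simp add: power_diff power_one_over)
qed

lemma notinf:
  assumes b0: "b 0 = 0" and inc: "\<And>i. i < d \<Longrightarrow> b i < b (Suc i)"
    and nz: "\<exists>i\<le>d. p i \<noteq> 0"
  shows "\<not> frequently (\<lambda>x. rF b p {..d} x = 0) at_top"
proof
  assume fr: "frequently (\<lambda>x. rF b p {..d} x = 0) at_top"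
  define D where "D = (\<Sum>i\<le>d. degree (p i))"
  define B where "B = b d"
  define R where "R = 1 / (B + 1)"
  define aR where "aR i t = (\<Sum>k\<le>degree (p i). coeff (p i) k * t ^ (D - k))" for i t
  define aC where "aC i z = (\<Sum>k\<le>degree (p i). complex_of_real (coeff (p i) k) * z ^ (D - k))" for i z
  define A where "A z = - (\<Sum>i\<le>d. aC i z)" for z
  define Bf where "Bf z = (\<Sum>i\<le>d. aC i z * Ln (1 + of_real (b i) * z))" for z
  have bnn: "\<And>i. i \<le> d \<Longrightarrow> b i \<ge> 0" using b_nonneg[OF b0 inc] by auto
  have bleB: "\<And>i. i \<le> d \<Longrightarrow> b i \<le> B" unfolding B_def using mono_b[where d=d and b=b, OF inc] by auto
  have B0: "B \<ge> 0" using bnn B_def by auto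
  have R0: "R > 0" using B0 R_def by simp
  have iR: "1/R > 0" using R0 by simp
  have degD: "\<And>i. i \<le> d \<Longrightarrow> degree (p i) \<le> D"
    unfolding D_def by (rule member_le_sum) auto
  have aC_real: "aC i (of_real t) = of_real (aR i t)" for i t
    by (simp add: aC_def aR_def)
  have iden: "A (of_real t) * of_real (ln t) + Bf (of_real t) = of_real (t ^ D * rF b p {..d} (1/t))"
    if t: "t > 0" for t
  proof -
    have "t ^ D * rF b p {..d} (1/t) = (\<Sum>i\<le>d. aR i t * (ln (1 + b i * t) - ln t))"
      unfolding rF_def sum_distrib_left
    proof (rule sum.cong[OF refl])
      fix i assume i: "i \<in> {..d}"
      have pos: "1 + b i * t > 0" using bnn[of i] i t by (simp add: add_pos_nonneg)
      have "ln (1/t + b i) = ln ((1 + b i * t) / t)" using t by (simp add: field_simps)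
      also have "\<dots> = ln (1 + b i * t) - ln t" using pos t by (simp add: ln_div)
      finally have "ln (1/t + b i) = ln (1 + b i * t) - ln t" .
      moreover have "aR i t = t ^ D * poly (p i) (1/t)"
        unfolding aR_def using aR_eq[OF degD t] i by auto
      ultimately show "t ^ D * (poly (p i) (1 / t) * ln (1 / t + b i)) = aR i t * (ln (1 + b i * t) - ln t)"
        by simp
    qed
    also have "\<dots> = - (\<Sum>i\<le>d. aR i t) * ln t + (\<Sum>i\<le>d. aR i t * ln (1 + b i * t))"
      by (simp add: algebra_simps sum_subtractf sum_distrib_right sum_distrib_left)
    finally have eq: "t ^ D * rF b p {..d} (1/t) = - (\<Sum>i\<le>d. aR i t) * ln t + (\<Sum>i\<le>d. aR i t * ln (1 + b i * t))" .
    have lnc: "Ln (1 + complex_of_real (b i) * complex_of_real t) = of_real (ln (1 + b i * t))" if "i \<le> d" for i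
    proof -
      have "1 + b i * t > 0" using bnn[OF that] t by (simp add: add_pos_nonneg)
      moreover have "1 + complex_of_real (b i) * complex_of_real t = of_real (1 + b i * t)" by simp
      ultimately show ?thesis by (simp only: Ln_of_real)
    qed
    show ?thesis unfolding eq A_def Bf_def
      by (simp add: aC_real lnc)
  qed
  have hA: "A holomorphic_on ball 0 R"
    unfolding A_def[abs_def] aC_def by (intro holomorphic_intros)
  have hB: "Bf holomorphic_on ball 0 R"
    unfolding Bf_def[abs_def] aC_def
  proof (intro holomorphic_intros)
    fix i and z :: complex assume i: "i \<in> {..d}" and z: "z \<in> ball 0 R"
    have nz: "cmod z < R" using z by (simp add: dist_norm)
    have "b i * cmod z \<le> (B + 1) * cmod z" using bleB[of i] i by (intro mult_right_mono) auto
    also have "\<dots> < (B + 1) * R" using nz B0 by (intro mult_strict_left_mono) auto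
    also have "\<dots> = 1" using B0 by (simp add: R_def)
    finally have lt: "b i * cmod z < 1" .
    have mre: "- Re z \<le> cmod z" using abs_Re_le_cmod[of z] by linarith
    have h1: "b i * (- Re z) \<le> b i * cmod z" by (rule mult_left_mono[OF mre]) (use bnn i in auto)
    have "Re (1 + of_real (b i) * z) = 1 + b i * Re z" by simp
    then have "Re (1 + of_real (b i) * z) > 0" using lt h1 by linarith
    then show "1 + complex_of_real (b i) * z \<notin> \<real>\<^sub>\<le>\<^sub>0" by (auto simp: complex_nonpos_Reals_iff)
  qed
  have fr2: "frequently (\<lambda>t. rF b p {..d} (1/t) = 0) (at_right 0)"
    using fr unfolding frequently_def eventually_at_right_to_top by (simp add: inverse_eq_divide)
  have "frequently (\<lambda>t. A (of_real t) * of_real (ln t) + Bf (of_real t) = 0) (at_right 0)"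
  proof (rule frequently_rev_mp[OF fr2])
    show "\<forall>\<^sub>F t in at_right 0. rF b p {..d} (1 / t) = 0 \<longrightarrow> A (of_real t) * of_real (ln t) + Bf (of_real t) = 0"
      using eventually_at_right_less[of "0::real"] by (rule eventually_mono) (metis iden mult_zero_right of_real_0)
  qed
  from L[OF hA hB this] have Z: "\<forall>z\<in>ball 0 R. A z = 0 \<and> Bf z = 0" .
  define M where "M = 1/R"
  have iM: "M > 0" using R0 M_def by simp
  show False
  proof (rule zero_all[OF b0 inc nz, of "M + 2" "{M + 1<..<M+3}"])
    show "M + 2 islimpt {M + 1<..<M+3}" by (rule open_imp_islimpt) auto
    show "rF b p {..d} x = 0" if x: "x \<in> {M + 1<..<M+3}" for x
    proof -
      define t where "t = 1/x"
      have x1: "x > M" using x by simp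
      have xpos: "x > 0" using x1 iM by linarith
      have tpos: "t > 0" using xpos unfolding t_def by simp
      have "1/x < 1/(M)" by (rule divide_strict_left_mono) (use x1 iM xpos in auto)
      then have tR: "t < R" unfolding t_def M_def by simp
      then have "complex_of_real t \<in> ball 0 R" using tpos by (simp add: dist_norm)
      then have "of_real (t ^ D * rF b p {..d} (1/t)) = (0::complex)" using Z iden[OF tpos] by simp
      then have "t ^ D * rF b p {..d} (1/t) = 0" by (simp only: of_real_eq_0_iff)
      then show ?thesis using tpos unfolding t_def by simp
    qed
  qed (use iM in auto)
qed


lemma fin:
  assumes b0: "b 0 = 0" and inc: "\<And>i. i < d \<Longrightarrow> b i < b (Suc i)"
    and nz: "\<exists>i\<le>d. p i \<noteq> 0"
  shows "finite {x. x > 0 \<and> rF b p {..d} x = 0}"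
proof (rule ccontr)
  define Z where "Z = {x. x > 0 \<and> rF b p {..d} x = 0}"
  assume "infinite {x. x > 0 \<and> rF b p {..d} x = 0}"
  then have inf: "infinite Z" unfolding Z_def .
  have "eventually (\<lambda>t. rF b p {..d} t \<noteq> 0) (at_right 0)"
    using not0[OF b0 inc nz] unfolding frequently_def by simp
  then obtain a where a: "a > 0" "\<And>y. y > 0 \<Longrightarrow> y < a \<Longrightarrow> rF b p {..d} y \<noteq> 0"
    unfolding eventually_at_right_field by blast
  have "eventually (\<lambda>t. rF b p {..d} t \<noteq> 0) at_top"
    using notinf[OF b0 inc nz] unfolding frequently_def by simp
  then obtain N where N: "\<And>x. x \<ge> N \<Longrightarrow> rF b p {..d} x \<noteq> 0"
    unfolding eventually_at_top_linorder by blast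
  have sub: "Z \<subseteq> {a..N}"
  proof
    fix x assume "x \<in> Z"
    then have "x > 0" "rF b p {..d} x = 0" by (auto simp: Z_def)
    then have "\<not> x < a" "\<not> N \<le> x" using a N by blast+
    then show "x \<in> {a..N}" by simp
  qed
  obtain \<xi> where xi: "\<xi> \<in> {a..N}" "\<xi> islimpt Z"
    using compact_eq_Bolzano_Weierstrass[THEN iffD1, OF compact_Icc, rule_format, of Z a N] inf sub by blast
  show False
    by (rule zero_all[OF b0 inc nz, of \<xi> Z]) (use xi a in \<open>auto simp: Z_def\<close>)
qed

lemma Re_poly: "Re (poly p (complex_of_real x)) = poly (map_poly Re p) x"
  by (induction p) (auto simp: map_poly_pCons)

lemma Im_poly: "Im (poly p (complex_of_real x)) = poly (map_poly Im p) x"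
  by (induction p) (auto simp: map_poly_pCons)

lemma not_hol: "\<not> holonomic (\<lambda>n. complex_of_real (ln (real n)))"
proof
  assume "holonomic (\<lambda>n. complex_of_real (ln (real n)))"
  then obtain d and p :: "nat \<Rightarrow> complex poly" where nz: "\<exists>i\<le>d. p i \<noteq> 0"
    and eq: "\<And>n. n \<ge> 1 \<Longrightarrow> (\<Sum>i\<le>d. poly (p i) (of_nat n) * complex_of_real (ln (real (n + i)))) = 0"
    unfolding holonomic_def by blast
  define bb where "bb i = real i" for i
  define q where "q i = map_poly Re (p i)" for i
  define r where "r i = map_poly Im (p i)" for i
  have b0: "bb 0 = 0" and inc: "\<And>i. i < d \<Longrightarrow> bb i < bb (Suc i)" by (auto simp: bb_def)
  have injS: "inj (\<lambda>n::nat. real (Suc n))" by (auto simp: inj_def)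
  have zqr: "rF bb q {..d} x = 0 \<and> rF bb r {..d} x = 0" if x: "x = real m" "m \<ge> 1" for m x
  proof -
    have e: "(\<Sum>i\<le>d. poly (p i) (of_real x) * complex_of_real (ln (x + bb i))) = 0"
      using eq[of m] x by (simp add: bb_def of_real_of_nat_eq add_ac)
    have "Re (\<Sum>i\<le>d. poly (p i) (of_real x) * complex_of_real (ln (x + bb i))) = 0"
      using e by simp
    then have 1: "rF bb q {..d} x = 0"
      unfolding rF_def q_def Re_sum by (simp add: Re_poly)
    have "Im (\<Sum>i\<le>d. poly (p i) (of_real x) * complex_of_real (ln (x + bb i))) = 0"
      using e by simp
    then have 2: "rF bb r {..d} x = 0"
      unfolding rF_def r_def Im_sum by (simp add: Im_poly)
    from 1 2 show ?thesis ..
  qed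
  have zq: "rF bb q {..d} (real (Suc n)) = 0" and zr: "rF bb r {..d} (real (Suc n)) = 0" for n
    using zqr[OF refl, of "Suc n"] by auto
  have infq: "infinite {x. x > 0 \<and> rF bb q {..d} x = 0}"
  proof -
    have "range (\<lambda>n. real (Suc n)) \<subseteq> {x. x > 0 \<and> rF bb q {..d} x = 0}" using zq by auto
    then show ?thesis using infinite_super range_inj_infinite[OF injS] by blast
  qed
  have infr: "infinite {x. x > 0 \<and> rF bb r {..d} x = 0}"
  proof -
    have "range (\<lambda>n. real (Suc n)) \<subseteq> {x. x > 0 \<and> rF bb r {..d} x = 0}" using zr by auto
    then show ?thesis using infinite_super range_inj_infinite[OF injS] by blast
  qed
  obtain i where i: "i \<le> d" "p i \<noteq> 0" using nz by blast
  have "q i \<noteq> 0 \<or> r i \<noteq> 0"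
  proof (rule ccontr)
    assume "\<not> ?thesis"
    then have "q i = 0" "r i = 0" by auto
    then have "p i = 0"
      by (intro poly_eqI) (auto simp: q_def r_def complex_eq_iff poly_eq_iff coeff_map_poly)
    with i show False by simp
  qed
  then show False
  proof
    assume "q i \<noteq> 0"
    then show False using fin[where b=bb and d=d and p=q, OF b0 inc] infq i by blast
  next
    assume "r i \<noteq> 0"
    then show False using fin[where b=bb and d=d and p=r, OF b0 inc] infr i by blast
  qed
qed

theorem mainTheorem1:
  fixes d :: nat and b :: "nat \<Rightarrow> real" and p :: "nat \<Rightarrow> real poly"
  assumes "b 0 = 0"
    and "\<And>i. i < d \<Longrightarrow> b i < b (Suc i)"
    and "\<exists>i\<le>d. p i \<noteq> 0"
  shows "finite {x::real. x > 0 \<and> (\<Sum>i\<le>d. poly (p i) x * ln (x + b i)) = 0}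
         \<and> \<not> holonomic (\<lambda>n. complex_of_real (ln (real n)))"
  using fin[OF assms] not_hol unfolding rF_def by blast

end
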